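(* Let $r(\cdot)\in\mathcal{P}^{\log}(\mathbb{R})$ with $r(x)=2$ for all $x\in[0,1]$ and $r^-_{[0,16]}>1$. Then the kernel $K(x,y)=K_1(x-y)K_2(y)$ belongs to $H_{r(\cdot),1}$.
   Context: Here $n=1$. Fix $\beta>0$; $K_1(t)=\chi_{[2,3]}(t)$ and $K_2(t)=t^{-1/2}\big[\log(e/t)\big]^{-\frac{1+\beta}{2}}\chi_{(0,1)}(t)$. Cubes are intervals $Q$; $mQ$ is the concentric interval of length $m\ell(Q)$. $\|f\|_{p(\cdot)}=\inf\{\lambda>0:\int_{\{p<\infty\}}|f/\lambda|^{p(x)}dx+\|(f/\lambda)\chi_{\{p=\infty\}}\|_\infty\le1\}$ for measurable $p(\cdot):\mathbb{R}\to[1,\infty]$. $\mathcal{P}^{\log}(\mathbb{R})$: $1/p$ satisfies $|1/p(x)-1/p(y)|\le c_0/(-\log|x-y|)$ for $|x-y|<1/2$ and $|1/p(x)-1/p_\infty|\le c_\infty/\log(e+|x|)$. $r^-_E=\operatorname{ess\,inf}_Er$. $K\in H_{r(\cdot),1}$ means $\sup_Q\sup_{x,z\in\frac12Q}\sum_{m\ge1}2^m\ell(Q)\frac{\|[K(x,\cdot)-K(z,\cdot)]\chi_{2^mQ\setminus2^{m-1}Q}\|_{r(\cdot)}}{\|\chi_{2^mQ}\|_{r(\cdot)}}<\infty$. *)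

theory Defs
  imports "HOL-Analysis.Analysis" "HOL-Probability.Essential_Supremum"
begin

definition exp_inv :: "(real \<Rightarrow> ereal) \<Rightarrow> real \<Rightarrow> real" where
  "exp_inv p x = (if p x = \<infinity> then 0 else 1 / real_of_ereal (p x))"

text \<open>Log-Hoelder class P^log(R): measurable p with values in [1,infinity],
  local log-Hoelder continuity of 1/p and log-Hoelder decay to 1/p_infinity
  (p_infinity in [1,infinity], i.e. 1/p_infinity in [0,1]).\<close>
definition Plog :: "(real \<Rightarrow> ereal) \<Rightarrow> bool" where
  "Plog p \<longleftrightarrow> p \<in> borel_measurable borel \<and> (\<forall>x. 1 \<le> p x) \<and>
     (\<exists>c0 cinf qinf. 0 \<le> qinf \<and> qinf \<le> 1 \<and>
        (\<forall>x y. 0 < \<bar>x - y\<bar> \<and> \<bar>x - y\<bar> < 1/2 \<longrightarrow>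
              \<bar>exp_inv p x - exp_inv p y\<bar> \<le> c0 / (- ln \<bar>x - y\<bar>)) \<and>
        (\<forall>x. \<bar>exp_inv p x - qinf\<bar> \<le> cinf / ln (exp 1 + \<bar>x\<bar>)))"

definition essinf_on :: "real set \<Rightarrow> (real \<Rightarrow> ereal) \<Rightarrow> ereal" where
  "essinf_on E f = Sup {a. AE x in lebesgue. x \<in> E \<longrightarrow> a \<le> f x}"

definition var_modular :: "(real \<Rightarrow> ereal) \<Rightarrow> (real \<Rightarrow> real) \<Rightarrow> ennreal" where
  "var_modular p f =
     (\<integral>\<^sup>+ x. indicator {x. p x < \<infinity>} x * ennreal (\<bar>f x\<bar> powr real_of_ereal (p x)) \<partial>lebesgue)
     + e2ennreal (esssup lebesgue (\<lambda>x. ereal (\<bar>f x\<bar> * indicator {x. p x = \<infinity>} x)))"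

text \<open>Luxemburg norm (value infinity if f is not in L^{p(.)}).\<close>
definition var_norm :: "(real \<Rightarrow> ereal) \<Rightarrow> (real \<Rightarrow> real) \<Rightarrow> ennreal" where
  "var_norm p f = Inf {ennreal lam | lam. lam > 0 \<and> var_modular p (\<lambda>x. f x / lam) \<le> 1}"

definition intv :: "real \<Rightarrow> real \<Rightarrow> real set" where
  "intv c l = {c - l/2 .. c + l/2}"

definition K1 :: "real \<Rightarrow> real" where
  "K1 t = indicator {2..3} t"

definition K2 :: "real \<Rightarrow> real \<Rightarrow> real" where
  "K2 \<beta> t = t powr (-1/2) * (ln (exp 1 / t)) powr (- (1 + \<beta>) / 2) * indicator {0<..<1} t"

text \<open>The class H_{r(.),1}: sup over intervals Q (centre c, length l > 0) and x,z in Q/2 of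
  sum_{m>=1} 2^m l(Q) ||(K(x,.)-K(z,.)) chi_{2^m Q \ 2^{m-1} Q}||_r / ||chi_{2^m Q}||_r is finite.\<close>
definition H_class :: "(real \<Rightarrow> ereal) \<Rightarrow> (real \<Rightarrow> real \<Rightarrow> real) \<Rightarrow> bool" where
  "H_class r K \<longleftrightarrow>
    (SUP (c, l) \<in> {(c, l). (l::real) > 0}.
       SUP (x, z) \<in> intv c (l/2) \<times> intv c (l/2).
         (\<Sum>m. ennreal (2 ^ Suc m * l) *
              var_norm r (\<lambda>y. (K x y - K z y) *
                 indicator (intv c (2 ^ Suc m * l) - intv c (2 ^ m * l)) y)
              / var_norm r (indicator (intv c (2 ^ Suc m * l))))) < top"

end

theory Submission
  imports Defs
begin

definition gK :: "real \<Rightarrow> real \<Rightarrow> real" where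
  "gK \<beta> y = (1/y) * (1 - ln y) powr (-(1+\<beta>))"

lemma FK_deriv:
  assumes "0 < y" "y < 1" "\<beta> > 0"
  shows "DERIV (\<lambda>y. (1 - ln y) powr (-\<beta>) / \<beta>) y :> gK \<beta> y"
proof -
  have "ln y < 0" using assms by simp
  then have L: "1 - ln y > 0" by linarith
  have d1: "DERIV (\<lambda>y. 1 - ln y) y :> 0 - (1/y)"
    using assms by (intro DERIV_diff DERIV_const DERIV_ln_divide)
  have "DERIV (\<lambda>y. (1 - ln y) powr (-\<beta>)) y :> (-\<beta>) * (1 - ln y) powr (-\<beta> - 1) * (0 - (1/y))"
    using DERIV_fun_powr[OF d1 L, of "-\<beta>"] by simp
  then have "DERIV (\<lambda>y. (1 - ln y) powr (-\<beta>) / \<beta>) y :> (-\<beta>) * (1 - ln y) powr (-\<beta> - 1) * (0 - (1/y)) / \<beta>"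
    by (intro DERIV_cdivide)
  moreover have "(-\<beta>) * (1 - ln y) powr (-\<beta> - 1) * (0 - (1/y)) / \<beta> = gK \<beta> y"
  proof -
    have e: "-\<beta> - 1 = -(1+\<beta>)" by simp
    show ?thesis unfolding gK_def e using assms by simp
  qed
  ultimately show ?thesis by simp
qed

lemma gK_int:
  assumes "\<beta> > 0"
  shows "set_integrable lborel (einterval 0 1) (gK \<beta>)" "(LBINT x=0..1. gK \<beta> x) = 1/\<beta> - 0"
proof -
  have l1: "filterlim (\<lambda>y. 1 - ln y) at_top (at_right (0::real))"
  proof -
    have "filterlim (\<lambda>y. - ln y) at_top (at_right (0::real))"
      using ln_at_0 by (simp add: filterlim_uminus_at_top)
    from filterlim_tendsto_add_at_top[OF tendsto_const[of 1] this] show ?thesis by simp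
  qed
  have l2: "((\<lambda>y. (1 - ln y) powr (-\<beta>) / \<beta>) \<longlongrightarrow> 0 / \<beta>) (at_right (0::real))"
    by (intro tendsto_divide tendsto_const tendsto_neg_powr[OF _ l1]) (use assms in auto)
  have A: "(((\<lambda>y. (1 - ln y) powr (-\<beta>) / \<beta>) \<circ> real_of_ereal) \<longlongrightarrow> 0) (at_right (ereal 0))"
    unfolding ereal_tendsto_simps1 using l2 by simp
  have "isCont (\<lambda>y. (1 - ln y) powr (-\<beta>) / \<beta>) 1"
    using assms by (intro continuous_intros) auto
  then have "((\<lambda>y. (1 - ln y) powr (-\<beta>) / \<beta>) \<longlongrightarrow> 1/\<beta>) (at 1)"
    by (simp add: isCont_def)
  then have "((\<lambda>y. (1 - ln y) powr (-\<beta>) / \<beta>) \<longlongrightarrow> 1/\<beta>) (at_left 1)"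
    by (rule tendsto_mono[OF at_le, rotated]) simp
  then have B: "(((\<lambda>y. (1 - ln y) powr (-\<beta>) / \<beta>) \<circ> real_of_ereal) \<longlongrightarrow> 1/\<beta>) (at_left (ereal 1))"
    unfolding ereal_tendsto_simps1 .
  have C: "isCont (gK \<beta>) x" if "0 < x" "x < 1" for x
  proof -
    have "ln x < 0" using that by simp
    then have "1 - ln x > 0" by linarith
    then show ?thesis unfolding gK_def using that by (intro continuous_intros) auto
  qed
  have N: "AE x in lborel. ereal 0 < ereal x \<longrightarrow> ereal x < ereal 1 \<longrightarrow> 0 \<le> gK \<beta> x"
    by (auto simp: gK_def)
  have D: "DERIV (\<lambda>y. (1 - ln y) powr (-\<beta>) / \<beta>) x :> gK \<beta> x" if "ereal 0 < ereal x" "ereal x < ereal 1" for x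
    using FK_deriv[of x \<beta>] that assms by simp
  have C': "isCont (gK \<beta>) x" if "ereal 0 < ereal x" "ereal x < ereal 1" for x
    using C[of x] that by simp
  have lt: "ereal 0 < ereal 1" by simp
  note R = interval_integral_FTC_nonneg[OF lt D C' N A B]
  show "set_integrable lborel (einterval 0 1) (gK \<beta>)" "(LBINT x=0..1. gK \<beta> x) = 1/\<beta> - 0"
    using R by (simp_all add: zero_ereal_def one_ereal_def)
qed

lemma K2_sq:
  assumes "0 < y" "y < 1"
  shows "(K2 \<beta> y)^2 = gK \<beta> y"
proof -
  have l: "ln (exp 1 / y) = 1 - ln y" using assms by (simp add: ln_div)
  have "ln y < 0" using assms by simp
  then have L: "1 - ln y > 0" by linarith
  have a: "(y powr (-1/2))^2 = 1/y"
    using assms by (simp add: power2_eq_square flip: powr_add)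
  have b: "((1 - ln y) powr (-(1+\<beta>)/2))^2 = (1 - ln y) powr (-(1+\<beta>))"
    using L by (simp add: power2_eq_square flip: powr_add)
  show ?thesis unfolding K2_def gK_def l using assms a b by (simp add: power_mult_distrib)
qed

lemma K2_sq_nn:
  assumes "\<beta> > 0"
  shows "(\<integral>\<^sup>+y. indicator {0<..<1} y * ennreal ((K2 \<beta> y)^2) \<partial>lebesgue) = ennreal (1/\<beta>)"
proof -
  have si: "set_integrable lborel {0<..<1} (gK \<beta>)" using gK_int(1)[OF assms] by (simp add: zero_ereal_def one_ereal_def)
  have iv: "(LINT x : {0<..<1} | lborel. gK \<beta> x) = 1/\<beta>"
    using gK_int(2)[OF assms] by (simp add: interval_lebesgue_integral_le_eq zero_ereal_def one_ereal_def)
  have pt: "indicator {0<..<1} y * ennreal ((K2 \<beta> y)^2) = ennreal (indicator {0<..<1} y *\<^sub>R gK \<beta> y)" for y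
    by (cases "0 < y \<and> y < 1") (auto simp: K2_sq indicator_def)
  have "(\<integral>\<^sup>+y. indicator {0<..<1} y * ennreal ((K2 \<beta> y)^2) \<partial>lebesgue)
      = (\<integral>\<^sup>+y. ennreal (indicator {0<..<1} y *\<^sub>R gK \<beta> y) \<partial>lborel)"
    unfolding pt by (rule nn_integral_completion)
  also have "\<dots> = ennreal (LINT x : {0<..<1} | lborel. gK \<beta> x)"
    unfolding set_lebesgue_integral_def
    by (rule nn_integral_eq_integral) (use si in \<open>auto simp: set_integrable_def gK_def indicator_def\<close>)
  finally show ?thesis using iv by simp
qed

lemma K2_nonneg: "0 \<le> K2 \<beta> y"
  unfolding K2_def by (auto simp: indicator_def)

lemma K2_zero: "\<not> (0 < y \<and> y < 1) \<Longrightarrow> K2 \<beta> y = 0"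
  unfolding K2_def by (auto simp: indicator_def)

lemma K2_meas: "(\<lambda>x. indicator {0<..<1} x * ennreal ((K2 \<beta> x)^2)) \<in> borel_measurable lebesgue"
  by (rule measurable_completion) (unfold K2_def, measurable)

lemma num_bound:
  assumes b: "\<beta> > 0" and a: "a > 0" and r2: "\<forall>x\<in>{0..1}. r x = 2"
    and F: "\<forall>y. \<bar>F y\<bar> \<le> a * K2 \<beta> y"
  shows "var_norm r F \<le> ennreal (a / sqrt \<beta>)"
proof -
  define lam where "lam = a / sqrt \<beta>"
  have lam: "lam > 0" using a b by (simp add: lam_def)
  have Fz: "F y = 0" if "\<not> (0 < y \<and> y < 1)" for y
    using F[rule_format, of y] K2_zero[OF that, of \<beta>] by simp
  have pw: "indicator {x. r x < \<infinity>} x * ennreal (\<bar>F x / lam\<bar> powr real_of_ereal (r x))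
      \<le> ennreal \<beta> * (indicator {0<..<1} x * ennreal ((K2 \<beta> x)^2))" for x
  proof (cases "0 < x \<and> x < 1")
    case True
    then have rx: "r x = 2" using r2 by auto
    have e: "\<bar>F x / lam\<bar> powr real_of_ereal (r x) = (F x / lam)^2"
    proof -
      have "\<bar>F x / lam\<bar> powr real_of_ereal (r x) = \<bar>F x / lam\<bar> powr (numeral (num.Bit0 num.One))"
        by (simp add: rx del: abs_divide)
      also have "\<dots> = \<bar>F x / lam\<bar> ^ 2" by (rule powr_numeral) simp
      finally show ?thesis by (simp only: power2_abs)
    qed
    have "(F x)^2 \<le> (a * K2 \<beta> x)^2"
      using power_mono[OF F[rule_format, of x] abs_ge_zero, of 2] by simp
    then have "(F x / lam)^2 \<le> \<beta> * (K2 \<beta> x)^2"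
      proof -
      have "(F x / lam)^2 = (F x)^2 * \<beta> / a^2" using a b by (simp add: lam_def power_divide power_mult_distrib)
      also have "\<dots> \<le> (a * K2 \<beta> x)^2 * \<beta> / a^2"
        using b \<open>(F x)^2 \<le> (a * K2 \<beta> x)^2\<close> by (intro divide_right_mono mult_right_mono) auto
      also have "\<dots> = \<beta> * (K2 \<beta> x)^2" using a by (simp add: power_mult_distrib)
      finally show ?thesis .
    qed
    then have "ennreal (\<bar>F x / lam\<bar> powr real_of_ereal (r x)) \<le> ennreal (\<beta> * (K2 \<beta> x)^2)"
      unfolding e by (rule ennreal_leI)
    moreover have "indicator {x. r x < \<infinity>} x * ennreal (\<bar>F x / lam\<bar> powr real_of_ereal (r x))
       \<le> ennreal (\<bar>F x / lam\<bar> powr real_of_ereal (r x))"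
      by (simp add: indicator_def)
    moreover have "ennreal (\<beta> * (K2 \<beta> x)^2) = ennreal \<beta> * (indicator {0<..<1} x * ennreal ((K2 \<beta> x)^2))"
      using True b by (simp add: ennreal_mult)
    ultimately show ?thesis by (metis order_trans)
  next
    case False
    then show ?thesis by (simp add: Fz)
  qed
  have I1: "(\<integral>\<^sup>+ x. indicator {x. r x < \<infinity>} x * ennreal (\<bar>F x / lam\<bar> powr real_of_ereal (r x)) \<partial>lebesgue) \<le> 1"
  proof -
    have "(\<integral>\<^sup>+ x. indicator {x. r x < \<infinity>} x * ennreal (\<bar>F x / lam\<bar> powr real_of_ereal (r x)) \<partial>lebesgue)
        \<le> (\<integral>\<^sup>+ x. ennreal \<beta> * (indicator {0<..<1} x * ennreal ((K2 \<beta> x)^2)) \<partial>lebesgue)"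
      by (rule nn_integral_mono) (rule pw)
    also have "\<dots> = ennreal \<beta> * (\<integral>\<^sup>+ x. indicator {0<..<1} x * ennreal ((K2 \<beta> x)^2) \<partial>lebesgue)"
      by (rule nn_integral_cmult[OF K2_meas])
    also have "\<dots> = 1" using b by (simp add: K2_sq_nn ennreal_mult[symmetric])
    finally show ?thesis .
  qed
  have g0: "(\<lambda>x. ereal (\<bar>F x / lam\<bar> * indicator {x. r x = \<infinity>} x)) = (\<lambda>x. ereal 0)"
  proof
    fix x show "ereal (\<bar>F x / lam\<bar> * indicator {x. r x = \<infinity>} x) = ereal 0"
      using r2 Fz[of x] by (cases "0 < x \<and> x < 1") (auto simp: indicator_def)
  qed
  have "esssup lebesgue (\<lambda>x. ereal (\<bar>F x / lam\<bar> * indicator {x. r x = \<infinity>} x)) \<le> 0"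
    unfolding g0 by (rule esssup_I) (auto simp: zero_ereal_def)
  then have E: "e2ennreal (esssup lebesgue (\<lambda>x. ereal (\<bar>F x / lam\<bar> * indicator {x. r x = \<infinity>} x))) = 0"
    using e2ennreal_mono[of _ 0] by (simp add: e2ennreal_neg)
  have "var_modular r (\<lambda>x. F x / lam) \<le> 1"
    unfolding var_modular_def E using I1 by simp
  then have "ennreal lam \<in> {ennreal lam | lam. lam > 0 \<and> var_modular r (\<lambda>x. F x / lam) \<le> 1}"
    using lam by blast
  then show ?thesis unfolding var_norm_def lam_def[symmetric] by (rule Inf_lower)
qed

lemma num_zero:
  fixes \<beta> :: real
  assumes "\<beta> > 0" "\<forall>x\<in>{0..1}. r x = 2"
  shows "var_norm r (\<lambda>y. 0) = 0"
proof -
  have "var_norm r (\<lambda>y. 0) \<le> 0 + ennreal e" if "e > 0" for e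
  proof -
    have "var_norm r (\<lambda>y. 0) \<le> ennreal ((e * sqrt \<beta>) / sqrt \<beta>)"
      by (rule num_bound) (use assms that in \<open>auto simp: K2_nonneg\<close>)
    moreover have "(e * sqrt \<beta>) / sqrt \<beta> = e" using assms(1) by simp
    ultimately show ?thesis by (metis add.left_neutral)
  qed
  then have "var_norm r (\<lambda>y. 0) \<le> 0" by (rule ennreal_le_epsilon) blast
  then show ?thesis by simp
qed

lemma den_bound:
  assumes P: "Plog r" and ab: "b - a > 1"
  shows "1 \<le> var_norm r (indicator {a..b})"
proof -
  from P have meas[measurable]: "r \<in> borel_measurable borel" and r1: "\<And>x. 1 \<le> r x"
    by (auto simp: Plog_def)
  define I where "I = {a..b::real}"
  define S where "S = I \<inter> {x. r x < \<infinity>}"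
  define T where "T = I \<inter> {x. r x = \<infinity>}"
  have Sm: "S \<in> sets lborel" unfolding S_def I_def by measurable
  have Tm: "T \<in> sets lborel" unfolding T_def I_def by measurable
  have ST: "I = S \<union> T" unfolding S_def T_def by (auto simp: less_top)
  have EI: "emeasure lborel I = ennreal (b - a)" unfolding I_def using ab by simp
  show ?thesis unfolding var_norm_def
  proof (rule Inf_greatest)
    fix z assume "z \<in> {ennreal lam | lam. lam > 0 \<and> var_modular r (\<lambda>x. indicator {a..b} x / lam) \<le> 1}"
    then obtain lam where z: "z = ennreal lam" "lam > 0"
      and mod1: "var_modular r (\<lambda>x. indicator I x / lam) \<le> 1" unfolding I_def by blast
    show "1 \<le> z"
    proof (rule ccontr)
      assume "\<not> 1 \<le> z"
      then have lam1: "lam < 1" using z by (auto simp: not_le ennreal_less_one_iff)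
      define f where "f x = indicator I x / lam" for x
      have big: "1 < ennreal (1 / lam)" using lam1 z(2) by (simp add: field_simps)
      have "1 < var_modular r f"
      proof (cases "emeasure lborel T = 0")
        case True
        have "emeasure lborel I \<le> emeasure lborel S + emeasure lborel T"
          unfolding ST by (rule emeasure_subadditive[OF Sm Tm])
        then have ES: "ennreal (b - a) \<le> emeasure lborel S" using True EI by simp
        have pw: "indicator S x \<le> indicator {x. r x < \<infinity>} x * ennreal (\<bar>f x\<bar> powr real_of_ereal (r x))" for x
        proof (cases "x \<in> S")
          case True
          then obtain t where t: "r x = ereal t" using r1[of x] unfolding S_def
            by (cases "r x") auto
          have t1: "1 \<le> t" using r1[of x] t by simp
          have fx: "\<bar>f x\<bar> = 1 / lam" using True z(2) by (simp add: f_def S_def indicator_def)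
          have "1 \<le> (1 / lam) powr t" using lam1 z(2) t1 by (intro ge_one_powr_ge_zero) auto
          then show ?thesis using True t fx by (simp add: S_def indicator_def)
        qed (simp)
        have "emeasure lborel S = (\<integral>\<^sup>+ x. indicator S x \<partial>lebesgue)"
          by (simp add: nn_integral_completion nn_integral_indicator[OF Sm])
        also have "\<dots> \<le> (\<integral>\<^sup>+ x. indicator {x. r x < \<infinity>} x * ennreal (\<bar>f x\<bar> powr real_of_ereal (r x)) \<partial>lebesgue)"
          by (rule nn_integral_mono) (rule pw)
        also have "\<dots> \<le> var_modular r f" unfolding var_modular_def by simp
        finally have "emeasure lborel S \<le> var_modular r f" .
        moreover have "1 < ennreal (b - a)" using ab by simp
        ultimately show ?thesis using ES by (meson less_le_trans order_trans)
      next
        case False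
        define g where "g x = ereal (\<bar>f x\<bar> * indicator {x. r x = \<infinity>} x)" for x
        have g: "g x = ereal (1 / lam * indicator T x)" for x
          using z(2) by (simp add: g_def f_def T_def indicator_def)
        have gm: "g \<in> borel_measurable lebesgue"
          unfolding g using Tm by (intro measurable_completion borel_measurable_ereal borel_measurable_times borel_measurable_const borel_measurable_indicator) simp
        have es: "ereal (1 / lam) \<le> esssup lebesgue g"
        proof (rule ccontr)
          assume "\<not> ereal (1 / lam) \<le> esssup lebesgue g"
          then have lt: "esssup lebesgue g < ereal (1 / lam)" by simp
          have "AE x in lebesgue. x \<notin> T"
            using esssup_AE[of g lebesgue]
          proof (rule eventually_mono)
            fix x assume "g x \<le> esssup lebesgue g"
            then have "g x < ereal (1 / lam)" using lt by simp
            then show "x \<notin> T" by (auto simp: g indicator_def)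
          qed
          then have "emeasure lebesgue T = 0"
            by (subst (asm) AE_iff_measurable[of T]) (use Tm in auto)
          then show False using False Tm by simp
        qed
        have "1 < e2ennreal (ereal (1 / lam))" using big by simp
        also have "\<dots> \<le> e2ennreal (esssup lebesgue g)" by (rule e2ennreal_mono[OF es])
        also have "\<dots> \<le> var_modular r f" unfolding var_modular_def g_def by simp
        finally show ?thesis .
      qed
      then show False using mod1 unfolding f_def by simp
    qed
  qed
qed

lemma div_le_self_ennreal:
  fixes X D :: ennreal
  assumes "1 \<le> D"
  shows "X / D \<le> X"
proof (rule divide_le_posI_ennreal)
  show "0 < D" using assms by (metis not_one_le_zero not_gr_zero)
  have "1 * X \<le> D * X" using assms by (intro mult_right_mono) auto
  then show "X \<le> D * X" by simp
qed

lemma geo_sum: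
  fixes l :: real
  assumes "l > 0"
  shows "(\<Sum>m<n. (if 2 ^ Suc m * l < 24 then 2 ^ Suc m * l else 0)) \<le> 2 ^ Suc n * l \<and>
         (\<Sum>m<n. (if 2 ^ Suc m * l < 24 then 2 ^ Suc m * l else (0::real))) \<le> 48"
proof (induction n)
  case 0
  then show ?case using assms by simp
next
  case (Suc n)
  define f where "f m = (if 2 ^ Suc m * l < 24 then 2 ^ Suc m * l else (0::real))" for m
  have p: "(2::real) ^ Suc n * l \<le> 2 ^ Suc (Suc n) * l" using assms by simp
  have q: "(2::real) ^ Suc (Suc n) * l = 2 * (2 ^ Suc n * l)" by simp
  have s: "(\<Sum>m<Suc n. f m) = (\<Sum>m<n. f m) + f n" by simp
  have IH: "(\<Sum>m<n. f m) \<le> 2 ^ Suc n * l" "(\<Sum>m<n. f m) \<le> 48" using Suc unfolding f_def by auto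
  have "(\<Sum>m<Suc n. f m) \<le> 2 ^ Suc (Suc n) * l \<and> (\<Sum>m<Suc n. f m) \<le> 48"
  proof (cases "2 ^ Suc n * l < (24::real)")
    case True
    then have "f n = 2 ^ Suc n * l" unfolding f_def by simp
    then show ?thesis unfolding s using IH True q by linarith
  next
    case False
    then have "f n = 0" unfolding f_def by simp
    then show ?thesis unfolding s using IH p by linarith
  qed
  then show ?case unfolding f_def .
qed

lemma term_bound:
  fixes \<beta> l c x z :: real and r :: "real \<Rightarrow> ereal" and m :: nat
  assumes b: "\<beta> > 0" and P: "Plog r" and r2: "\<forall>x\<in>{0..1}. r x = 2"
    and l: "l > 0" and x: "x \<in> intv c (l/2)" and z: "z \<in> intv c (l/2)"
  shows "ennreal (2 ^ Suc m * l) *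
              var_norm r (\<lambda>y. (K1 (x - y) * K2 \<beta> y - K1 (z - y) * K2 \<beta> y) *
                 indicator (intv c (2 ^ Suc m * l) - intv c (2 ^ m * l)) y)
              / var_norm r (indicator (intv c (2 ^ Suc m * l)))
         \<le> ennreal ((if 2 ^ Suc m * l < 24 then 2 ^ Suc m * l else 0) / sqrt \<beta>)"
proof -
  define P where "P = (2::real) ^ Suc m * l"
  have Pm: "(2::real) ^ m * l = P / 2" unfolding P_def by simp
  have P2: "P \<ge> 2 * l" unfolding P_def using l
    by (simp add: mult_right_mono[of 1 "2^m" l])
  define G where "G y = (K1 (x - y) * K2 \<beta> y - K1 (z - y) * K2 \<beta> y) *
                 indicator (intv c P - intv c (2 ^ m * l)) y" for y
  have G_le: "\<forall>y. \<bar>G y\<bar> \<le> 1 * K2 \<beta> y"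
  proof
    fix y show "\<bar>G y\<bar> \<le> 1 * K2 \<beta> y"
      using K2_nonneg[of \<beta> y] unfolding G_def K1_def by (auto simp: indicator_def)
  qed
  have main: "ennreal P * var_norm r G / var_norm r (indicator (intv c P))
      \<le> ennreal ((if P < 24 then P else 0) / sqrt \<beta>)"
  proof (cases "\<forall>y. G y = 0")
    case True
    then have "G = (\<lambda>y. 0)" by auto
    then show ?thesis using num_zero[OF b r2] by simp
  next
    case False
    then obtain y where y: "G y \<noteq> 0" by auto
    then have yA: "y \<in> intv c P - intv c (P/2)" unfolding Pm[symmetric] G_def by (auto simp: indicator_def)
    have y01: "0 < y \<and> y < 1" using y K2_zero[of y \<beta>] unfolding G_def by force
    have yxz: "(2 \<le> x - y \<and> x - y \<le> 3) \<or> (2 \<le> z - y \<and> z - y \<le> 3)"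
      using y unfolding G_def K1_def by (auto simp: indicator_def)
    have ar: "P < 24 \<and> P > 1" using yA yxz x z P2 l unfolding intv_def by auto
    have N: "var_norm r G \<le> ennreal (1 / sqrt \<beta>)"
      using num_bound[OF b _ r2 G_le] by simp
    have D: "1 \<le> var_norm r (indicator (intv c P))"
      unfolding intv_def by (rule den_bound[OF P]) (use ar in simp)
    have "ennreal P * var_norm r G / var_norm r (indicator (intv c P)) \<le> ennreal P * var_norm r G"
      by (rule div_le_self_ennreal[OF D])
    also have "\<dots> \<le> ennreal P * ennreal (1 / sqrt \<beta>)"
      by (rule mult_left_mono[OF N]) simp
    also have "\<dots> = ennreal (P / sqrt \<beta>)"
      using ar b by (simp add: divide_inverse ennreal_mult)
    finally show ?thesis using ar by simp
  qed
  show ?thesis using main unfolding P_def G_def[abs_def] .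
qed

theorem mainTheorem17:
  fixes \<beta> :: real and r :: "real \<Rightarrow> ereal"
  assumes "\<beta> > 0"
    and "Plog r"
    and "\<forall>x \<in> {0..1}. r x = 2"
    and "essinf_on {0..16} r > 1"
  shows "H_class r (\<lambda>x y. K1 (x - y) * K2 \<beta> y)"
proof -
  note b = assms(1) and P = assms(2) and r2 = assms(3)
  define B where "B = ennreal (48 / sqrt \<beta>)"
  have inner: "(\<Sum>m. ennreal (2 ^ Suc m * l) *
              var_norm r (\<lambda>y. (K1 (x - y) * K2 \<beta> y - K1 (z - y) * K2 \<beta> y) *
                 indicator (intv c (2 ^ Suc m * l) - intv c (2 ^ m * l)) y)
              / var_norm r (indicator (intv c (2 ^ Suc m * l)))) \<le> B"
    if l: "l > 0" and x: "x \<in> intv c (l/2)" and z: "z \<in> intv c (l/2)" for c l x z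
  proof (rule suminf_le_const[OF summableI])
    fix n
    define a where "a m = (if 2 ^ Suc m * l < 24 then 2 ^ Suc m * l else (0::real))" for m
    have "(\<Sum>m<n. ennreal (2 ^ Suc m * l) *
              var_norm r (\<lambda>y. (K1 (x - y) * K2 \<beta> y - K1 (z - y) * K2 \<beta> y) *
                 indicator (intv c (2 ^ Suc m * l) - intv c (2 ^ m * l)) y)
              / var_norm r (indicator (intv c (2 ^ Suc m * l))))
        \<le> (\<Sum>m<n. ennreal (a m / sqrt \<beta>))"
      by (rule sum_mono) (unfold a_def, rule term_bound[OF b P r2 l x z])
    also have "\<dots> = ennreal (\<Sum>m<n. a m / sqrt \<beta>)"
      by (rule sum_ennreal) (use l b in \<open>auto simp: a_def\<close>)
    also have "\<dots> \<le> B"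
    proof -
      have "(\<Sum>m<n. a m) \<le> 48" using geo_sum[OF l, of n] unfolding a_def by simp
      then have "(\<Sum>m<n. a m) / sqrt \<beta> \<le> 48 / sqrt \<beta>" using b by (intro divide_right_mono) auto
      then show ?thesis unfolding B_def by (simp add: sum_divide_distrib[symmetric] ennreal_leI)
    qed
    finally show "(\<Sum>m<n. ennreal (2 ^ Suc m * l) *
              var_norm r (\<lambda>y. (K1 (x - y) * K2 \<beta> y - K1 (z - y) * K2 \<beta> y) *
                 indicator (intv c (2 ^ Suc m * l) - intv c (2 ^ m * l)) y)
              / var_norm r (indicator (intv c (2 ^ Suc m * l)))) \<le> B" .
  qed
  have "(SUP (c, l) \<in> {(c, l). (l::real) > 0}.
       SUP (x, z) \<in> intv c (l/2) \<times> intv c (l/2).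
         (\<Sum>m. ennreal (2 ^ Suc m * l) *
              var_norm r (\<lambda>y. (K1 (x - y) * K2 \<beta> y - K1 (z - y) * K2 \<beta> y) *
                 indicator (intv c (2 ^ Suc m * l) - intv c (2 ^ m * l)) y)
              / var_norm r (indicator (intv c (2 ^ Suc m * l))))) \<le> B"
    apply (rule SUP_least)
    apply (clarify)
    apply (simp only: prod.case)?
    apply (rule SUP_least)
    apply (clarify)
    apply (simp only: prod.case)?
    apply (rule inner)
      apply auto
    done
  also have "B < top" unfolding B_def by simp
  finally show ?thesis unfolding H_class_def .
qed

end
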